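(* Let $r\ge 2$ and $t\ge 2$ be integers, and let $n=a(r+t-1)+b$ with integers $a\ge 0$ and $0\le b\le r+t-2$. Suppose there exists a minimal $(r-1)$-$(r+t-1,r,1)$ covering of size $c$. Then $$a\left(\binom{r+t-1}{r}-c\right)+\binom{b}{r}\le ex_r\left(n,Tr(K_{1,t})\right).$$
   Context: For a graph $F$ with vertex set $\{v_1,\dots,v_p\}$ and edge set $\{e_1,\dots,e_q\}$, a hypergraph $\mathcal{H}$ contains $F$ as a trace if there exist distinct vertices $w_1,\dots,w_p\in V(\mathcal{H})$ and distinct edges $f_1,\dots,f_q\in E(\mathcal{H})$ such that whenever $e_i=v_\alpha v_\beta$, we have $f_i\cap\{w_1,\dots,w_p\}=\{w_\alpha,w_\beta\}$. For $r\ge 2$, $ex_r(n,Tr(F))$ denotes the maximum number of edges of an $n$-vertex $r$-uniform hypergraph that does not contain $F$ as a trace. $K_{1,t}$ is the star with $t$ edges. For $v\ge k\ge s$, an $s$-$(v,k,\lambda)$ covering is a collection $\mathcal{C}$ of $k$-subsets (blocks) of a $v$-element set $X$ such that every $s$-subset of $X$ is contained in at least $\lambda$ blocks of $\mathcal{C}$; its size is $|\mathcal{C}|$. A minimal covering is one of minimum possible size. *)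

theory Defs
  imports Main "HOL-Library.Multiset"
begin

text \<open>A graph F is given by a vertex set VF and a set EF of 2-element edges.\<close>
definition contains_trace :: "'a set \<Rightarrow> 'a set set \<Rightarrow> 'v set \<Rightarrow> 'v set set \<Rightarrow> bool" where
  "contains_trace V H VF EF \<longleftrightarrow>
     (\<exists>w f. inj_on w VF \<and> w ` VF \<subseteq> V \<and> inj_on f EF \<and> f ` EF \<subseteq> H \<and>
            (\<forall>e\<in>EF. f e \<inter> w ` VF = w ` e))"

definition star_V :: "nat \<Rightarrow> nat set" where
  "star_V t = {0..t}"
definition star_E :: "nat \<Rightarrow> nat set set" where
  "star_E t = {{0, i} | i. i \<in> {1..t}}"

definition uniform_hypergraph :: "nat \<Rightarrow> nat \<Rightarrow> nat set set \<Rightarrow> bool" where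
  "uniform_hypergraph r n H \<longleftrightarrow> (\<forall>e\<in>H. e \<subseteq> {0..<n} \<and> card e = r)"

definition ex_trace :: "nat \<Rightarrow> nat \<Rightarrow> 'v set \<Rightarrow> 'v set set \<Rightarrow> nat" where
  "ex_trace r n VF EF = Max {card H | H. uniform_hypergraph r n H \<and> \<not> contains_trace {0..<n} H VF EF}"

text \<open>s-(v,k,lambda) covering on ground set X (with |X| = v): a multiset of k-subsets of X
  such that every s-subset of X lies in at least lambda blocks.\<close>
definition is_covering :: "'a set \<Rightarrow> nat \<Rightarrow> nat \<Rightarrow> nat \<Rightarrow> 'a set multiset \<Rightarrow> bool" where
  "is_covering X s k lam C \<longleftrightarrow>
     (\<forall>B\<in>#C. B \<subseteq> X \<and> card B = k) \<and>
     (\<forall>S. S \<subseteq> X \<and> card S = s \<longrightarrow> size (filter_mset (\<lambda>B. S \<subseteq> B) C) \<ge> lam)"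

definition is_minimal_covering :: "'a set \<Rightarrow> nat \<Rightarrow> nat \<Rightarrow> nat \<Rightarrow> 'a set multiset \<Rightarrow> bool" where
  "is_minimal_covering X s k lam C \<longleftrightarrow>
     is_covering X s k lam C \<and> (\<forall>C'. is_covering X s k lam C' \<longrightarrow> size C \<le> size C')"

end

theory Submission
  imports Defs
begin

lemma card_set_mset_le_size: "card (set_mset C) \<le> size C"
  by (induction C) (auto simp: card_insert_if)

lemma no_star_block:
  fixes Y W :: "nat set" and D :: "nat set set"
  assumes fin: "finite Y" and WY: "W \<subseteq> Y" and w0: "w0 \<in> W" and cW: "card W = t + 1"
    and r2: "r \<ge> 2" and t2: "t \<ge> 2"
    and cs: "card Y + 1 < r + t \<or> (card Y = r + t - 1 \<and> (\<forall>B\<in>D. B \<subseteq> Y \<and> card B = r)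
              \<and> (\<forall>S. S \<subseteq> Y \<and> card S = r - 1 \<longrightarrow> (\<exists>B\<in>D. S \<subseteq> B)))"
    and edges: "\<forall>x\<in>W-{w0}. \<exists>f. f \<subseteq> Y \<and> card f = r \<and> f \<notin> D \<and> f \<inter> W = {w0, x}"
  shows False
  using cs
proof
  assume small: "card Y + 1 < r + t"
  have finW: "finite W" using fin WY finite_subset by blast
  have "card (W - {w0}) = t" using cW w0 finW by simp
  then have "W - {w0} \<noteq> {}" using t2 by (metis card.empty not_numeral_le_zero)
  then obtain x where x: "x \<in> W - {w0}" by blast
  obtain f where f: "f \<subseteq> Y" "card f = r" "f \<inter> W = {w0, x}" using edges x by blast
  have sub: "f \<subseteq> Y - (W - {w0, x})" using f by blast
  have "card (W - {w0, x}) = t - 1" using cW w0 x finW by (simp add: card_Diff_subset)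
  moreover have "card (Y - (W - {w0, x})) = card Y - card (W - {w0, x})"
    using WY fin by (meson Diff_subset card_Diff_subset finite_subset subset_trans)
  ultimately have "card (Y - (W - {w0, x})) \<le> r - 1" using small by simp
  moreover have "card f \<le> card (Y - (W - {w0, x}))" using sub fin by (simp add: card_mono)
  ultimately show False using f r2 by simp
next
  assume big: "card Y = r + t - 1 \<and> (\<forall>B\<in>D. B \<subseteq> Y \<and> card B = r)
              \<and> (\<forall>S. S \<subseteq> Y \<and> card S = r - 1 \<longrightarrow> (\<exists>B\<in>D. S \<subseteq> B))"
  have finW: "finite W" using fin WY finite_subset by blast
  define S where "S = insert w0 (Y - W)"
  have "card (Y - W) = card Y - card W" using WY fin by (meson card_Diff_subset finite_subset)
  then have cYW: "card (Y - W) = r - 2" using big cW r2 by simp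
  have cS: "card S = r - 1" unfolding S_def using cYW w0 fin r2 by simp
  have SY: "S \<subseteq> Y" unfolding S_def using w0 WY by blast
  obtain B where B: "B \<in> D" "S \<subseteq> B" using big cS SY by blast
  have BY: "B \<subseteq> Y" and cB: "card B = r" using big B by auto
  have finB: "finite B" using BY fin finite_subset by blast
  have "B - S \<noteq> {}"
  proof
    assume "B - S = {}"
    then have "B \<subseteq> S" by blast
    then have "card B \<le> card S" using SY fin by (meson card_mono finite_subset)
    then show False using cB cS r2 by simp
  qed
  then obtain x where x: "x \<in> B" "x \<notin> S" by blast
  have xW: "x \<in> W - {w0}" using x BY unfolding S_def by blast
  obtain f where f: "f \<subseteq> Y" "card f = r" "f \<notin> D" "f \<inter> W = {w0, x}" using edges xW by blast
  have fB: "f \<subseteq> B"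
  proof
    fix y assume y: "y \<in> f"
    show "y \<in> B"
    proof (cases "y \<in> W")
      case True then have "y = w0 \<or> y = x" using f y by blast
      then show ?thesis using B x unfolding S_def by blast
    next
      case False then show ?thesis using B f y unfolding S_def by blast
    qed
  qed
  have "f = B" using fB finB f cB by (simp add: card_subset_eq)
  then show False using f B by simp
qed


lemma shift_bij: "bij_betw (\<lambda>x::nat. k + x) {0..<m} {k..<k+m}"
proof -
  have "(\<lambda>x::nat. k + x) ` {0..<m} = {k..<k+m}"
  proof
    show "{k..<k+m} \<subseteq> (\<lambda>x. k + x) ` {0..<m}"
    proof
      fix y assume "y \<in> {k..<k+m}"
      then have "y = k + (y - k)" "y - k \<in> {0..<m}" by auto
      then show "y \<in> (\<lambda>x. k + x) ` {0..<m}" by blast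
    qed
  qed auto
  then show ?thesis unfolding bij_betw_def by (simp add: inj_on_def)
qed

lemma cover_transport:
  assumes g: "bij_betw g X Y" and finX: "finite X"
    and D1: "\<forall>B\<in>D. B \<subseteq> X \<and> card B = r"
    and D2: "\<forall>S. S \<subseteq> X \<and> card S = k \<longrightarrow> (\<exists>B\<in>D. S \<subseteq> B)"
  shows "\<forall>B\<in>(image g) ` D. B \<subseteq> Y \<and> card B = r"
    and "\<forall>S. S \<subseteq> Y \<and> card S = k \<longrightarrow> (\<exists>B\<in>(image g) ` D. S \<subseteq> B)"
proof -
  have inj: "inj_on g X" and im: "g ` X = Y" using g by (auto simp: bij_betw_def)
  show "\<forall>B\<in>(image g) ` D. B \<subseteq> Y \<and> card B = r"
  proof
    fix B' assume "B' \<in> (image g) ` D"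
    then obtain B where B: "B \<in> D" "B' = g ` B" by blast
    have "B \<subseteq> X" "card B = r" using D1 B by auto
    moreover have "inj_on g B" using inj \<open>B \<subseteq> X\<close> inj_on_subset by blast
    ultimately show "B' \<subseteq> Y \<and> card B' = r" using B im by (auto simp: card_image)
  qed
  show "\<forall>S. S \<subseteq> Y \<and> card S = k \<longrightarrow> (\<exists>B\<in>(image g) ` D. S \<subseteq> B)"
  proof (intro allI impI)
    fix S assume S: "S \<subseteq> Y \<and> card S = k"
    define S0 where "S0 = inv_into X g ` S"
    have S0X: "S0 \<subseteq> X" unfolding S0_def using S im by (auto intro: inv_into_into)
    have "inj_on (inv_into X g) Y" using inj im inj_on_inv_into by blast
    then have "card S0 = k" unfolding S0_def using S by (metis card_image inj_on_subset)
    then obtain B where B: "B \<in> D" "S0 \<subseteq> B" using D2 S0X by blast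
    have "g ` S0 = S" unfolding S0_def using S im
      by (simp add: image_image subset_iff f_inv_into_f cong: image_cong)
    then have "S \<subseteq> g ` B" using B by blast
    then show "\<exists>B\<in>(image g) ` D. S \<subseteq> B" using B by blast
  qed
qed


theorem mainTheorem1:
  fixes r t n a b c :: nat
  assumes "r \<ge> 2" and "t \<ge> 2"
    and "n = a * (r + t - 1) + b" and "b \<le> r + t - 2"
    and "\<exists>(X :: nat set) C. finite X \<and> card X = r + t - 1 \<and>
            is_minimal_covering X (r - 1) r 1 C \<and> size C = c"
  shows "int a * (int ((r + t - 1) choose r) - int c) + int (b choose r)
           \<le> int (ex_trace r n (star_V t) (star_E t))"
proof -
  note r2 = assms(1) and t2 = assms(2)
  define m where "m = r + t - 1"
  have n: "n = a * m + b" and bm: "b < m" and bm2: "b + 1 < r + t" using assms unfolding m_def by auto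
  have m0: "m > 0" using bm by simp
  obtain X :: "nat set" and C where XC: "finite X" "card X = m" "is_minimal_covering X (r - 1) r 1 C"
    "size C = c" using assms(5) unfolding m_def by blast
  have cov: "is_covering X (r - 1) r 1 C" using XC(3) unfolding is_minimal_covering_def by blast
  define D0 where "D0 = set_mset C"
  have D01: "\<forall>B\<in>D0. B \<subseteq> X \<and> card B = r" using cov unfolding is_covering_def D0_def by blast
  have D02: "\<forall>S. S \<subseteq> X \<and> card S = r - 1 \<longrightarrow> (\<exists>B\<in>D0. S \<subseteq> B)"
  proof (intro allI impI)
    fix S assume S: "S \<subseteq> X \<and> card S = r - 1"
    then have "size (filter_mset (\<lambda>B. S \<subseteq> B) C) \<ge> 1" using cov unfolding is_covering_def by blast
    then have "filter_mset (\<lambda>B. S \<subseteq> B) C \<noteq> {#}" by (metis not_one_le_zero size_empty)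
    then obtain B where "B \<in># filter_mset (\<lambda>B. S \<subseteq> B) C" by (meson multiset_nonemptyE)
    then show "\<exists>B\<in>D0. S \<subseteq> B" unfolding D0_def by auto
  qed
  have cD0: "card D0 \<le> c" unfolding D0_def using XC(4) card_set_mset_le_size by metis
  obtain g where g: "bij_betw g X {0..<m}" using finite_same_card_bij[of X "{0..<m}"] XC by auto
  define Y where "Y j = (if j < a then {j*m..<j*m+m} else {a*m..<n})" for j
  define D where "D j = (if j < a then image (\<lambda>x. j*m + g x) ` D0 else {})" for j
  define Hj where "Hj j = {f. f \<subseteq> Y j \<and> card f = r \<and> f \<notin> D j}" for j
  define H where "H = (\<Union>j\<in>{..a}. Hj j)"
  have Ydiv: "v div m = j" if "j \<le> a" "v \<in> Y j" for j v
  proof (cases "j < a")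
    case True
    then have "m * j \<le> v" "v < m * Suc j" using that unfolding Y_def by (auto simp: mult.commute)
    then show ?thesis by (rule div_nat_eqI)
  next
    case False
    then have "j = a" using that by simp
    then have "m * j \<le> v" "v < m * Suc j" using that bm n False unfolding Y_def by (auto simp: mult.commute)
    then show ?thesis by (rule div_nat_eqI)
  qed
  have Yn: "Y j \<subseteq> {0..<n}" if "j \<le> a" for j
  proof (cases "j < a")
    case True
    then have "Suc j * m \<le> a * m" by (intro mult_le_mono1) simp
    then show ?thesis using True n unfolding Y_def by auto
  next
    case False then show ?thesis unfolding Y_def by auto
  qed
  have finY: "finite (Y j)" for j unfolding Y_def by auto
  have cY1: "card (Y j) = m" if "j < a" for j using that unfolding Y_def by simp
  have cY2: "card (Y a) = b" unfolding Y_def using n by simp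
  have Dp: "(\<forall>B\<in>D j. B \<subseteq> Y j \<and> card B = r) \<and> (\<forall>S. S \<subseteq> Y j \<and> card S = r - 1 \<longrightarrow> (\<exists>B\<in>D j. S \<subseteq> B))"
    if "j < a" for j
  proof -
    have bj: "bij_betw ((\<lambda>x. j*m + x) \<circ> g) X (Y j)"
      using bij_betw_trans[OF g shift_bij[of "j*m" m]] that unfolding Y_def by simp
    have eq: "D j = image ((\<lambda>x. j*m + x) \<circ> g) ` D0" using that unfolding D_def by (simp add: o_def)
    show ?thesis unfolding eq using cover_transport[OF bj XC(1) D01 D02] by blast
  qed
  have cD: "card (D j) \<le> c" for j
  proof (cases "j < a")
    case True
    then have "card (D j) \<le> card D0" unfolding D_def by (simp add: card_image_le D0_def)
    then show ?thesis using cD0 by simp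
  next
    case False then show ?thesis unfolding D_def by simp
  qed
  have unif: "uniform_hypergraph r n H"
    unfolding uniform_hypergraph_def H_def Hj_def using Yn by blast
  have finH: "finite (Hj j)" for j
  proof -
    have "Hj j \<subseteq> Pow (Y j)" unfolding Hj_def by blast
    then show ?thesis using finY finite_subset by blast
  qed
  have disj: "Hj i \<inter> Hj j = {}" if "i \<le> a" "j \<le> a" "i \<noteq> j" for i j
  proof (rule ccontr)
    assume "Hj i \<inter> Hj j \<noteq> {}"
    then obtain f where f: "f \<subseteq> Y i" "f \<subseteq> Y j" "card f = r" unfolding Hj_def by blast
    then have "f \<noteq> {}" using r2 by auto
    then obtain v where "v \<in> f" by blast
    then have "v div m = i" "v div m = j" using Ydiv f that by auto
    then show False using that by simp
  qed
  have cardH: "card H = (\<Sum>j\<in>{..a}. card (Hj j))"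
    unfolding H_def by (rule card_UN_disjoint) (use finH disj in auto)
  have cHj1: "int (card (Hj j)) \<ge> int (m choose r) - int c" if ja: "j < a" for j
  proof -
    define Q where "Q = {f. f \<subseteq> Y j \<and> card f = r}"
    have A: "Hj j = Q - D j" unfolding Hj_def Q_def by blast
    have B: "D j \<subseteq> Q" using Dp[OF ja] unfolding Q_def by blast
    have F: "finite Q" unfolding Q_def using finY by simp
    have FD: "finite (D j)" using F B finite_subset by blast
    have c1: "card (Hj j) = card Q - card (D j)" unfolding A by (rule card_Diff_subset[OF FD B])
    have c2: "card Q = m choose r" unfolding Q_def using n_subsets[OF finY] cY1[OF ja] by simp
    have c3: "card (D j) \<le> card Q" by (rule card_mono[OF F B])
    show ?thesis using c1 c2 c3 cD[of j] by linarith
  qed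
  have cHj2: "card (Hj a) = b choose r"
  proof -
    have "Hj a = {f. f \<subseteq> Y a \<and> card f = r}" unfolding Hj_def D_def by simp
    then show ?thesis using n_subsets[OF finY] cY2 by simp
  qed
  have "int (card H) = (\<Sum>j<a. int (card (Hj j))) + int (card (Hj a))"
    unfolding cardH by (simp add: lessThan_Suc_atMost[symmetric] of_nat_sum)
  moreover have "(\<Sum>j<a. int (card (Hj j))) \<ge> (\<Sum>j<a. int (m choose r) - int c)"
    by (rule sum_mono) (use cHj1 in auto)
  ultimately have cH: "int (card H) \<ge> int a * (int (m choose r) - int c) + int (b choose r)"
    using cHj2 by simp
  have notr: "\<not> contains_trace {0..<n} H (star_V t) (star_E t)"
  proof
    assume "contains_trace {0..<n} H (star_V t) (star_E t)"
    then have "\<exists>w f. inj_on w {0..t} \<and> w ` {0..t} \<subseteq> {0..<n} \<and> inj_on f (star_E t) \<and> f ` star_E t \<subseteq> H \<and>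
      (\<forall>e\<in>star_E t. f e \<inter> w ` {0..t} = w ` e)"
      unfolding contains_trace_def star_V_def .
    then obtain w f where wf0: "inj_on w {0..t} \<and> w ` {0..t} \<subseteq> {0..<n} \<and> inj_on f (star_E t) \<and> f ` star_E t \<subseteq> H \<and>
      (\<forall>e\<in>star_E t. f e \<inter> w ` {0..t} = w ` e)" by (elim exE)
    then have wf: "inj_on w {0..t}" "inj_on f (star_E t)" "f ` star_E t \<subseteq> H"
      "\<forall>e\<in>star_E t. f e \<inter> w ` {0..t} = w ` e" by auto
    define W where "W = w ` {0..t}"
    have E: "{0, i} \<in> star_E t" if "i \<in> {1..t}" for i
      unfolding star_E_def using that by (intro CollectI exI[of _ i]) simp
    have fH: "f {0, i} \<in> H" if "i \<in> {1..t}" for i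
      by (rule subsetD[OF wf(3) imageI[OF E[OF that]]])
    have fW: "f {0, i} \<inter> W = {w 0, w i}" if "i \<in> {1..t}" for i
    proof -
      have "f {0, i} \<inter> w ` {0..t} = w ` {0, i}" using wf(4) E[OF that] by blast
      then show ?thesis unfolding W_def by simp
    qed
    have w0f: "w 0 \<in> f {0, i}" "w i \<in> f {0, i}" if "i \<in> {1..t}" for i using fW[OF that] by auto
    have one: "(1::nat) \<in> {1..t}" using t2 by simp
    obtain j0 where j0: "j0 \<le> a" "f {0, 1} \<in> Hj j0" using fH[OF one] unfolding H_def by blast
    have inj0: "f {0, i} \<in> Hj j0" if i1: "i \<in> {1..t}" for i
    proof -
      obtain j where j: "j \<le> a" "f {0, i} \<in> Hj j" using fH[OF i1] unfolding H_def by blast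
      have "w 0 \<in> Y j" using j w0f[OF i1] unfolding Hj_def by blast
      moreover have "w 0 \<in> Y j0" using j0 w0f[OF one] unfolding Hj_def by blast
      ultimately have "j = j0" using Ydiv[OF j(1)] Ydiv[OF j0(1)] by metis
      then show ?thesis using j by simp
    qed
    show False
    proof (rule no_star_block[of "Y j0" W "w 0" t r "D j0"])
      show "finite (Y j0)" by (rule finY)
      show "W \<subseteq> Y j0"
      proof
        fix x assume "x \<in> W"
        then obtain i where i: "i \<in> {0..t}" "x = w i" unfolding W_def by auto
        show "x \<in> Y j0"
        proof (cases "i = 0")
          case True then show ?thesis using i w0f[OF one] inj0[OF one] unfolding Hj_def by blast
        next
          case False then have i1: "i \<in> {1..t}" using i by auto
          then show ?thesis using i w0f(2)[OF i1] inj0[OF i1] unfolding Hj_def by blast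
        qed
      qed
      show "w 0 \<in> W" unfolding W_def by simp
      show "card W = t + 1" unfolding W_def using wf(1) by (simp add: card_image)
      show "r \<ge> 2" "t \<ge> 2" using r2 t2 by auto
      show "card (Y j0) + 1 < r + t \<or> (card (Y j0) = r + t - 1 \<and> (\<forall>B\<in>D j0. B \<subseteq> Y j0 \<and> card B = r)
              \<and> (\<forall>S. S \<subseteq> Y j0 \<and> card S = r - 1 \<longrightarrow> (\<exists>B\<in>D j0. S \<subseteq> B)))"
      proof (cases "j0 < a")
        case True
        have "card (Y j0) = r + t - 1" using cY1[OF True] m_def by simp
        with Dp[OF True] show ?thesis by blast
      next
        case False then have "j0 = a" using j0 by simp
        then show ?thesis using cY2 bm2 by simp
      qed
      show "\<forall>x\<in>W-{w 0}. \<exists>f. f \<subseteq> Y j0 \<and> card f = r \<and> f \<notin> D j0 \<and> f \<inter> W = {w 0, x}"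
      proof
        fix x assume "x \<in> W - {w 0}"
        then obtain i where i: "i \<in> {0..t}" "x = w i" unfolding W_def by auto
        have "i \<noteq> 0" using i \<open>x \<in> W - {w 0}\<close> by (metis DiffE singletonI)
        then have i1: "i \<in> {1..t}" using i by auto
        show "\<exists>f. f \<subseteq> Y j0 \<and> card f = r \<and> f \<notin> D j0 \<and> f \<inter> W = {w 0, x}"
          using inj0[OF i1] fW[OF i1] i unfolding Hj_def by blast
      qed
    qed
  qed
  have fin: "finite {card H | H. uniform_hypergraph r n H \<and> \<not> contains_trace {0..<n} H (star_V t) (star_E t)}"
  proof -
    have "{card H | H. uniform_hypergraph r n H \<and> \<not> contains_trace {0..<n} H (star_V t) (star_E t)}
          \<subseteq> card ` Pow (Pow {0..<n})"
    proof
      fix x assume "x \<in> {card H | H. uniform_hypergraph r n H \<and> \<not> contains_trace {0..<n} H (star_V t) (star_E t)}"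
      then obtain H' where H': "x = card H'" "uniform_hypergraph r n H'" by blast
      then have "H' \<in> Pow (Pow {0..<n})" unfolding uniform_hypergraph_def by auto
      then show "x \<in> card ` Pow (Pow {0..<n})" using H'(1) by blast
    qed
    then show ?thesis by (rule finite_subset) simp
  qed
  have "card H \<le> ex_trace r n (star_V t) (star_E t)"
  proof -
    have "card H \<in> {card H | H. uniform_hypergraph r n H \<and> \<not> contains_trace {0..<n} H (star_V t) (star_E t)}"
      using unif notr by blast
    then show ?thesis unfolding ex_trace_def by (rule Max_ge[OF fin])
  qed
  then show ?thesis using cH unfolding m_def by linarith
qed

end
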